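(* For every signed subcubic graph $\Sigma$, $l_0(\Sigma) = l(\Sigma)$.
   Context: A signed graph $\Sigma = (G,\sigma)$ consists of a finite graph $G$ (loops and multiple edges allowed) and a sign function $\sigma: E(G) \to \{+1,-1\}$. A circle is a connected nonempty $2$-regular subgraph (a loop is a circle of length $1$, a pair of parallel edges forms a circle of length $2$); a circle is positive if the product of the signs of its edges is $+1$ and negative otherwise. $\Sigma$ is balanced if all its circles are positive. The frustration index $l(\Sigma)$ is the smallest number of edges whose deletion from $\Sigma$ leaves a balanced signed graph. The frustration number $l_0(\Sigma)$ is the smallest number of vertices whose deletion (together with all incident edges) from $\Sigma$ leaves a balanced signed graph. $\Sigma$ is subcubic if every vertex of the underlying graph $G$ has degree at most $3$. *)

theory Defs
  imports Main
begin

definition signed_graph :: "'v set \<Rightarrow> 'e set \<Rightarrow> ('e \<Rightarrow> 'v set) \<Rightarrow> ('e \<Rightarrow> int) \<Rightarrow> bool" where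
  "signed_graph V E ends sigma \<longleftrightarrow> finite V \<and> finite E \<and>
     (\<forall>e\<in>E. ends e \<subseteq> V \<and> 1 \<le> card (ends e) \<and> card (ends e) \<le> 2) \<and>
     (\<forall>e\<in>E. sigma e = 1 \<or> sigma e = -1)"

definition degree :: "'e set \<Rightarrow> ('e \<Rightarrow> 'v set) \<Rightarrow> 'v \<Rightarrow> nat" where
  "degree C ends v = card {e\<in>C. v \<in> ends e \<and> card (ends e) = 2}
                     + 2 * card {e\<in>C. ends e = {v}}"

definition verts_of :: "'e set \<Rightarrow> ('e \<Rightarrow> 'v set) \<Rightarrow> 'v set" where
  "verts_of C ends = \<Union> (ends ` C)"

definition adj_rel :: "'e set \<Rightarrow> ('e \<Rightarrow> 'v set) \<Rightarrow> ('v \<times> 'v) set" where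
  "adj_rel C ends = {(x, y). \<exists>e\<in>C. ends e = {x, y}}"

definition is_circle :: "'e set \<Rightarrow> ('e \<Rightarrow> 'v set) \<Rightarrow> 'e set \<Rightarrow> bool" where
  "is_circle E ends C \<longleftrightarrow> C \<subseteq> E \<and> C \<noteq> {} \<and>
     (\<forall>v\<in>verts_of C ends. degree C ends v = 2) \<and>
     (\<forall>u\<in>verts_of C ends. \<forall>w\<in>verts_of C ends. (u, w) \<in> (adj_rel C ends)\<^sup>*)"

definition balanced :: "'e set \<Rightarrow> ('e \<Rightarrow> 'v set) \<Rightarrow> ('e \<Rightarrow> int) \<Rightarrow> bool" where
  "balanced E ends sigma \<longleftrightarrow> (\<forall>C. is_circle E ends C \<longrightarrow> (\<Prod>e\<in>C. sigma e) = 1)"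

definition frustration_index :: "'v set \<Rightarrow> 'e set \<Rightarrow> ('e \<Rightarrow> 'v set) \<Rightarrow> ('e \<Rightarrow> int) \<Rightarrow> nat" where
  "frustration_index V E ends sigma =
     (LEAST k. \<exists>F. F \<subseteq> E \<and> card F = k \<and> balanced (E - F) ends sigma)"

definition frustration_number :: "'v set \<Rightarrow> 'e set \<Rightarrow> ('e \<Rightarrow> 'v set) \<Rightarrow> ('e \<Rightarrow> int) \<Rightarrow> nat" where
  "frustration_number V E ends sigma =
     (LEAST k. \<exists>X. X \<subseteq> V \<and> card X = k \<and>
        balanced {e\<in>E. ends e \<inter> X = {}} ends sigma)"

definition subcubic :: "'v set \<Rightarrow> 'e set \<Rightarrow> ('e \<Rightarrow> 'v set) \<Rightarrow> bool" where
  "subcubic V E ends \<longleftrightarrow> (\<forall>v\<in>V. degree E ends v \<le> 3)"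

end

theory Submission
  imports Defs
begin

definition consis :: "('e \<Rightarrow> 'v set) \<Rightarrow> ('e \<Rightarrow> int) \<Rightarrow> ('v \<Rightarrow> int) \<Rightarrow> 'e \<Rightarrow> bool" where
  "consis ends sigma s e \<longleftrightarrow> (if card (ends e) = 2 then sigma e = (\<Prod>v\<in>ends e. s v) else sigma e = 1)"

lemma card1E: assumes "card A = 1" obtains a where "A = {a}"
  using assms by (auto simp: card_Suc_eq)

lemma card2E: assumes "card A = 2" obtains a b where "a \<noteq> b" "A = {a, b}"
  using assms unfolding card_2_iff by blast

lemma fin_of_card: "1 \<le> card (A::'a set) \<Longrightarrow> finite A" using card.infinite by force

lemma circle_mono: "is_circle E' ends C \<Longrightarrow> E' \<subseteq> E \<Longrightarrow> is_circle E ends C"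
  unfolding is_circle_def by (meson subset_trans)

lemma balanced_mono: "balanced E ends sigma \<Longrightarrow> E' \<subseteq> E \<Longrightarrow> balanced E' ends sigma"
  unfolding balanced_def using circle_mono by metis

lemma sq1: "(s::int) = 1 \<or> s = -1 \<Longrightarrow> s ^ 2 = 1" by auto

lemma pot_balanced:
  assumes fE: "finite E" and cE: "\<forall>e\<in>E. 1 \<le> card (ends e) \<and> card (ends e) \<le> 2"
    and s1: "\<forall>v. s v = 1 \<or> s v = -1" and cs: "\<forall>e\<in>E. consis ends sigma s e"
  shows "balanced E ends sigma"
  unfolding balanced_def
proof (intro allI impI)
  fix C assume circ: "is_circle E ends C"
  have CE: "C \<subseteq> E" using circ unfolding is_circle_def by auto
  have fC: "finite C" using CE fE finite_subset by auto
  define W where "W = verts_of C ends"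
  have fin_ends: "\<forall>e\<in>C. finite (ends e)" using CE cE fin_of_card by blast
  have fW: "finite W" unfolding W_def verts_of_def using fC fin_ends by auto
  define k where "k e = (if card (ends e) = 2 then 1 else (2::nat))" for e
  have 1: "sigma e = (\<Prod>v\<in>ends e. s v ^ k e)" if "e \<in> C" for e
  proof (cases "card (ends e) = 2")
    case True then show ?thesis using cs that CE unfolding consis_def k_def by auto
  next
    case False
    then have "card (ends e) = 1" using cE that CE by force
    then obtain a where a: "ends e = {a}" by (rule card1E)
    then show ?thesis using False cs that CE sq1[of "s a"] s1 unfolding consis_def k_def by auto
  qed
  have 2: "(\<Prod>v\<in>ends e. s v ^ k e) = (\<Prod>v\<in>W. if v \<in> ends e then s v ^ k e else 1)" if "e \<in> C" for e
  proof -
    have "ends e \<subseteq> W" using that unfolding W_def verts_of_def by auto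
    then have "{v\<in>W. v \<in> ends e} = ends e" by auto
    then show ?thesis using prod.inter_filter[OF fW, of "\<lambda>v. s v ^ k e" "\<lambda>v. v \<in> ends e"] by simp
  qed
  have 4: "(\<Prod>e\<in>C. if v \<in> ends e then s v ^ k e else 1) = s v ^ (\<Sum>e\<in>C. if v \<in> ends e then k e else 0)" for v
    by (simp add: power_sum if_distrib[of "\<lambda>n. s v ^ n"] cong: if_cong)
  have 5: "(\<Sum>e\<in>C. if v \<in> ends e then k e else 0) = degree C ends v" for v
  proof -
    have "(\<Sum>e\<in>C. if v \<in> ends e then k e else 0) =
          (\<Sum>e\<in>C. (if v \<in> ends e \<and> card (ends e) = 2 then 1 else 0) + 2 * (if ends e = {v} then 1 else 0))"
    proof (rule sum.cong[OF refl])
      fix e assume "e \<in> C"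
      then have "card (ends e) = 1 \<or> card (ends e) = 2" using cE CE by force
      then show "(if v \<in> ends e then k e else 0) =
          (if v \<in> ends e \<and> card (ends e) = 2 then 1 else 0) + 2 * (if ends e = {v} then 1 else 0)"
        unfolding k_def by (auto simp: card_1_singleton_iff)
    qed
    also have "\<dots> = card {e\<in>C. v \<in> ends e \<and> card (ends e) = 2} + 2 * card {e\<in>C. ends e = {v}}"
      by (simp add: sum.distrib sum_distrib_left[symmetric] sum.inter_filter[OF fC, symmetric])
    finally show ?thesis unfolding degree_def .
  qed
  have "(\<Prod>e\<in>C. sigma e) = (\<Prod>e\<in>C. \<Prod>v\<in>W. if v \<in> ends e then s v ^ k e else 1)"
    using 1 2 by simp
  also have "\<dots> = (\<Prod>v\<in>W. \<Prod>e\<in>C. if v \<in> ends e then s v ^ k e else 1)"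
    by (rule prod.swap)
  also have "\<dots> = (\<Prod>v\<in>W. s v ^ 2)"
    using 4 5 circ unfolding is_circle_def W_def by simp
  also have "\<dots> = 1" using s1 sq1 by simp
  finally show "(\<Prod>e\<in>C. sigma e) = 1" .
qed
fun spath :: "'e set \<Rightarrow> ('e \<Rightarrow> 'v set) \<Rightarrow> 'v list \<Rightarrow> 'e list \<Rightarrow> bool" where
  "spath E ends [v] [] = True"
| "spath E ends (v # w # vs) (f # fs) = (f \<in> E \<and> ends f = {v, w} \<and> spath E ends (w # vs) fs)"
| "spath E ends _ _ = False"

lemma spath_drop: "spath E ends vs fs \<Longrightarrow> k < length vs \<Longrightarrow> spath E ends (drop k vs) (drop k fs)"
proof (induction E ends vs fs arbitrary: k rule: spath.induct)
  case (2 E ends v w vs f fs)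
  then show ?case by (cases k) auto
qed auto

lemma spath_ne: "spath E ends vs fs \<Longrightarrow> vs \<noteq> []"
  by (cases vs; cases fs) auto

lemma spath_ends_sub: "spath E ends vs fs \<Longrightarrow> f \<in> set fs \<Longrightarrow> ends f \<subseteq> set vs"
  by (induction E ends vs fs rule: spath.induct) auto

lemma spath_in_E: "spath E ends vs fs \<Longrightarrow> set fs \<subseteq> E"
  by (induction E ends vs fs rule: spath.induct) auto

lemma spath_card2: "spath E ends vs fs \<Longrightarrow> distinct vs \<Longrightarrow> f \<in> set fs \<Longrightarrow> card (ends f) = 2"
  by (induction E ends vs fs rule: spath.induct) auto

lemma spath_distinct: "spath E ends vs fs \<Longrightarrow> distinct vs \<Longrightarrow> distinct fs"
proof (induction E ends vs fs rule: spath.induct)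
  case (2 E ends v w vs f fs)
  have "f \<notin> set fs"
  proof
    assume "f \<in> set fs"
    then have "ends f \<subseteq> set (w # vs)" using 2 spath_ends_sub by fastforce
    then show False using 2 by auto
  qed
  then show ?case using 2 by auto
qed auto

lemma exists_spath:
  "(u, w) \<in> (adj_rel E ends)\<^sup>* \<Longrightarrow> \<exists>vs fs. spath E ends vs fs \<and> distinct vs \<and> hd vs = u \<and> last vs = w"
proof (induction rule: converse_rtrancl_induct)
  case base
  then show ?case by (intro exI[of _ "[w]"] exI[of _ "[]"]) auto
next
  case (step u y)
  then obtain vs fs where p: "spath E ends vs fs" "distinct vs" "hd vs = y" "last vs = w" by blast
  obtain f where f: "f \<in> E" "ends f = {u, y}" using step(1) unfolding adj_rel_def by auto
  have ne: "vs \<noteq> []" using p spath_ne by auto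
  show ?case
  proof (cases "u \<in> set vs")
    case True
    then obtain k where k: "k < length vs" "vs ! k = u" by (auto simp: in_set_conv_nth)
    show ?thesis
      apply (intro exI[of _ "drop k vs"] exI[of _ "drop k fs"])
      using spath_drop[OF p(1) k(1)] p k by (auto simp: hd_drop_conv_nth)
  next
    case False
    obtain vs' where vs: "vs = y # vs'" using ne p(3) by (cases vs) auto
    show ?thesis
      apply (intro exI[of _ "u # vs"] exI[of _ "f # fs"])
      using p f False ne vs by auto
  qed
qed

lemma spath_deg:
  "spath E ends vs fs \<Longrightarrow> distinct vs \<Longrightarrow> 2 \<le> length vs \<Longrightarrow> x \<in> set vs \<Longrightarrow>
   card {g \<in> set fs. x \<in> ends g} = (if x = hd vs \<or> x = last vs then 1 else 2)"
proof (induction E ends vs fs rule: spath.induct)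
  case (2 E ends v w vs f fs)
  have fnot: "f \<notin> set fs" using spath_distinct[OF 2(2) 2(3)] by auto
  show ?case
  proof (cases "vs = []")
    case True
    then have "fs = []" using 2 by (cases fs) auto
    then have "{g \<in> set (f # fs). x \<in> ends g} = {f}" using 2 True by auto
    then show ?thesis using 2 True by auto
  next
    case False
    have sub: "\<forall>g\<in>set fs. ends g \<subseteq> set (w # vs)" using 2 spath_ends_sub by fastforce
    have lw: "last (w # vs) \<noteq> w" using False 2(3) by (cases vs rule: rev_cases) auto
    have len: "2 \<le> length (w # vs)" using False by (cases vs) auto
    show ?thesis
    proof (cases "x = v")
      case True
      then have "{g \<in> set (f # fs). x \<in> ends g} = {f}" using 2 sub by auto
      then show ?thesis using True by simp
    next
      case False
      then have xin: "x \<in> set (w # vs)" using 2 by auto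
      have IH: "card {g \<in> set fs. x \<in> ends g} = (if x = hd (w # vs) \<or> x = last (w # vs) then 1 else 2)"
        using 2 xin len by auto
      show ?thesis
      proof (cases "x = w")
        case True
        then have "{g \<in> set (f # fs). x \<in> ends g} = insert f {g \<in> set fs. x \<in> ends g}" using 2 by auto
        then have "card {g \<in> set (f # fs). x \<in> ends g} = 2" using IH True fnot lw by simp
        then show ?thesis using True lw 2(3) by auto
      next
        case False
        then have "{g \<in> set (f # fs). x \<in> ends g} = {g \<in> set fs. x \<in> ends g}" using 2 \<open>x \<noteq> v\<close> by auto
        then show ?thesis using IH False \<open>x \<noteq> v\<close> by simp
      qed
    qed
  qed
qed auto

lemma spath_conn: "spath E ends vs fs \<Longrightarrow> x \<in> set vs \<Longrightarrow> (hd vs, x) \<in> (adj_rel (set fs) ends)\<^sup>*"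
proof (induction E ends vs fs rule: spath.induct)
  case (2 E ends v w vs f fs)
  show ?case
  proof (cases "x = v")
    case False
    then have "(w, x) \<in> (adj_rel (set fs) ends)\<^sup>*" using 2 by auto
    moreover have "adj_rel (set fs) ends \<subseteq> adj_rel (set (f # fs)) ends" unfolding adj_rel_def by auto
    ultimately have "(w, x) \<in> (adj_rel (set (f # fs)) ends)\<^sup>*" using rtrancl_mono by blast
    moreover have "(v, w) \<in> adj_rel (set (f # fs)) ends" using 2 unfolding adj_rel_def by auto
    ultimately show ?thesis by (simp add: converse_rtrancl_into_rtrancl)
  qed simp
qed auto

lemma spath_prod:
  "spath E ends vs fs \<Longrightarrow> distinct vs \<Longrightarrow> \<forall>g\<in>set fs. consis ends sigma s g \<Longrightarrow> \<forall>v. s v = 1 \<or> s v = -1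
   \<Longrightarrow> (\<Prod>g\<in>set fs. sigma g) = s (hd vs) * s (last vs)"
proof (induction E ends vs fs rule: spath.induct)
  case (1 E ends v)
  then show ?case using sq1[of "s v"] by (simp add: power2_eq_square)
next
  case (2 E ends v w vs f fs)
  have fnot: "f \<notin> set fs" using spath_distinct[OF 2(2) 2(3)] by auto
  have vw: "v \<noteq> w" using 2 by auto
  have sf: "sigma f = s v * s w" using 2(4) 2(2) vw unfolding consis_def by auto
  have IH: "(\<Prod>g\<in>set fs. sigma g) = s w * s (last (w # vs))" using 2 by auto
  have "s w * s w = 1" using sq1[of "s w"] 2(5) by (simp add: power2_eq_square)
  then have "s v * s w * (s w * s (last (w # vs))) = s v * s (last (w # vs))"
    by (metis mult.assoc mult.left_neutral mult.commute)
  then show ?case using fnot sf IH by simp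
qed auto

lemma sym_adj: "sym (adj_rel C ends)"
  unfolding sym_def adj_rel_def by (auto simp: insert_commute)

lemma path_circle:
  assumes p: "spath E0 ends vs fs" and d: "distinct vs" and l: "2 \<le> length vs"
    and e: "e \<notin> set fs" "ends e = {hd vs, last vs}" and sub: "insert e (set fs) \<subseteq> E'"
  shows "is_circle E' ends (insert e (set fs))"
proof -
  define C where "C = insert e (set fs)"
  obtain a b rest where vs: "vs = a # b # rest" using l by (cases vs; cases "tl vs") auto
  have "last vs \<in> set (b # rest)" unfolding vs by simp
  then have hl: "hd vs \<noteq> last vs" using d unfolding vs by auto
  have hin: "hd vs \<in> set vs" "last vs \<in> set vs" using l by (cases vs; auto)+
  have vsub: "verts_of C ends \<subseteq> set vs"
    unfolding verts_of_def C_def using spath_ends_sub[OF p] e hin by auto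
  have c2: "\<forall>g\<in>C. card (ends g) = 2" unfolding C_def using spath_card2[OF p d] e hl by auto
  have deg: "degree C ends x = 2" if "x \<in> set vs" for x
  proof -
    have "{g\<in>C. ends g = {x}} = {}" using c2 by auto
    then have z: "card {g\<in>C. ends g = {x}} = 0" by (metis card.empty)
    moreover have "{g\<in>C. x \<in> ends g \<and> card (ends g) = 2} = {g\<in>C. x \<in> ends g}" using c2 by auto
    moreover have "card {g\<in>C. x \<in> ends g} = 2"
    proof (cases "x = hd vs \<or> x = last vs")
      case True
      then have "{g\<in>C. x \<in> ends g} = insert e {g \<in> set fs. x \<in> ends g}" using e unfolding C_def by auto
      then show ?thesis using spath_deg[OF p d l that] True e by simp
    next
      case False
      then have "{g\<in>C. x \<in> ends g} = {g \<in> set fs. x \<in> ends g}" using e unfolding C_def by auto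
      then show ?thesis using spath_deg[OF p d l that] False by simp
    qed
    ultimately show ?thesis unfolding degree_def by (metis add_0_right mult_0_right)
  qed
  have conn: "(u, w) \<in> (adj_rel C ends)\<^sup>*" if "u \<in> set vs" "w \<in> set vs" for u w
  proof -
    have m: "adj_rel (set fs) ends \<subseteq> adj_rel C ends" unfolding adj_rel_def C_def by auto
    have "(hd vs, u) \<in> (adj_rel C ends)\<^sup>*" "(hd vs, w) \<in> (adj_rel C ends)\<^sup>*"
      using spath_conn[OF p] that rtrancl_mono[OF m] by blast+
    moreover have "sym ((adj_rel C ends)\<^sup>*)" using sym_rtrancl sym_adj by blast
    ultimately show ?thesis by (meson rtrancl_trans symD)
  qed
  have "C \<subseteq> E'" "C \<noteq> {}" using sub unfolding C_def by auto
  moreover have "\<forall>v\<in>verts_of C ends. degree C ends v = 2" using deg vsub by (meson subsetD)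
  moreover have "\<forall>u\<in>verts_of C ends. \<forall>w\<in>verts_of C ends. (u, w) \<in> (adj_rel C ends)\<^sup>*"
    using conn vsub by (meson subsetD)
  ultimately show ?thesis unfolding is_circle_def C_def by blast
qed
lemma consis_cong: "(\<forall>v\<in>ends e. s v = s' v) \<Longrightarrow> consis ends sigma s e = consis ends sigma s' e"
  unfolding consis_def using prod.cong[OF refl, of "ends e" s s'] by simp

lemma degree_mono: "finite E \<Longrightarrow> E' \<subseteq> E \<Longrightarrow> degree E' ends v \<le> degree E ends v"
  unfolding degree_def
  by (intro add_mono mult_le_mono2 card_mono) (auto intro: finite_subset)

lemma pm1_cases: "(a::int) = 1 \<or> a = -1 \<Longrightarrow> b = 1 \<or> b = -1 \<Longrightarrow> c = 1 \<or> c = -1 \<Longrightarrow> a \<noteq> b * c \<Longrightarrow> a = - (b * c)"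
  by auto

lemma pm1_cases2: "(a::int) = 1 \<or> a = -1 \<Longrightarrow> b = 1 \<or> b = -1 \<Longrightarrow> c = 1 \<or> c = -1 \<Longrightarrow> a * (b * c) = 1 \<Longrightarrow> a = b * c"
  by auto

lemma balanced_pot:
  assumes "finite E"
  shows "(\<forall>e\<in>E. 1 \<le> card (ends e) \<and> card (ends e) \<le> 2) \<longrightarrow> (\<forall>e\<in>E. sigma e = 1 \<or> sigma e = -1) \<longrightarrow>
    balanced E ends sigma \<longrightarrow> (\<exists>s. (\<forall>v. s v = 1 \<or> s v = -1) \<and> (\<forall>e\<in>E. consis ends sigma s e))"
  using assms
proof (induction E rule: finite_induct)
  case empty
  show ?case by (intro impI exI[of _ "\<lambda>_. 1"]) auto
next
  case (insert e E)
  show ?case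
  proof (intro impI)
    assume c: "\<forall>e\<in>insert e E. 1 \<le> card (ends e) \<and> card (ends e) \<le> 2"
      and sg: "\<forall>e\<in>insert e E. sigma e = 1 \<or> sigma e = -1"
      and bal: "balanced (insert e E) ends sigma"
    have "balanced E ends sigma" using bal balanced_mono[of "insert e E" ends sigma E] by blast
    then obtain s where s1: "\<forall>v. s v = 1 \<or> s v = -1" and cs: "\<forall>g\<in>E. consis ends sigma s g"
      using insert c sg by auto
    have ce: "card (ends e) = 1 \<or> card (ends e) = 2" using c by force
    show "\<exists>s. (\<forall>v. s v = 1 \<or> s v = -1) \<and> (\<forall>e\<in>insert e E. consis ends sigma s e)"
    proof (cases "consis ends sigma s e")
      case True
      then show ?thesis using s1 cs by auto
    next
      case False
      show ?thesis
      proof (cases "card (ends e) = 2")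
        case False2: False
        then have "card (ends e) = 1" using ce by simp
        then obtain a where a: "ends e = {a}" by (rule card1E)
        have z1: "{f\<in>{e}. a \<in> ends f \<and> card (ends f) = 2} = {}" using a by auto
        have z2: "{f\<in>{e}. ends f = {a}} = {e}" using a by auto
        have "is_circle (insert e E) ends {e}"
          unfolding is_circle_def verts_of_def degree_def using a z1 z2 by auto
        then have "sigma e = 1" using bal unfolding balanced_def by fastforce
        then have "consis ends sigma s e" using False2 unfolding consis_def by simp
        then show ?thesis using False by simp
      next
        case True2: True
        then obtain a b where ab: "a \<noteq> b" "ends e = {a, b}" by (rule card2E)
        have pe: "(\<Prod>v\<in>ends e. s v) = s a * s b" using ab by simp
        have ne: "sigma e \<noteq> s a * s b" using False True2 pe unfolding consis_def by simp
        define K where "K = {z. (a, z) \<in> (adj_rel E ends)\<^sup>*}"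
        show ?thesis
        proof (cases "b \<in> K")
          case True
          then obtain vs fs where p: "spath E ends vs fs" "distinct vs" "hd vs = a" "last vs = b"
            using exists_spath[of a b E ends] True unfolding K_def by auto
          have vne: "vs \<noteq> []" using spath_ne[OF p(1)] .
          have l: "2 \<le> length vs" using vne p ab by (cases vs; cases "tl vs") auto
          have en: "e \<notin> set fs" using spath_in_E[OF p(1)] insert(2) by auto
          have circ: "is_circle (insert e E) ends (insert e (set fs))"
            by (rule path_circle[OF p(1) p(2) l en]) (use ab p spath_in_E[OF p(1)] in auto)
          then have "(\<Prod>g\<in>insert e (set fs). sigma g) = 1" using bal unfolding balanced_def by blast
          moreover have "(\<Prod>g\<in>insert e (set fs). sigma g) = sigma e * (s a * s b)"
            using spath_prod[OF p(1) p(2), of sigma s] cs spath_in_E[OF p(1)] s1 en p by auto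
          ultimately have "sigma e * (s a * s b) = 1" by simp
          then have "sigma e = s a * s b" using pm1_cases2 s1 sg by blast
          then show ?thesis using ne by simp
        next
          case False
          define s' where "s' z = (if z \<in> K then - s z else s z)" for z
          have aK: "a \<in> K" unfolding K_def by simp
          have inv: "c \<in> K \<longleftrightarrow> d \<in> K" if "g \<in> E" "ends g = {c, d}" for g c d
          proof -
            have "(c, d) \<in> adj_rel E ends" "(d, c) \<in> adj_rel E ends"
              using that unfolding adj_rel_def by (auto simp: insert_commute)
            then show ?thesis unfolding K_def by (meson mem_Collect_eq rtrancl.rtrancl_into_rtrancl)
          qed
          have s'1: "\<forall>v. s' v = 1 \<or> s' v = -1" using s1 unfolding s'_def by auto
          have "consis ends sigma s' g" if "g \<in> E" for g
          proof (cases "card (ends g) = 2")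
            case True
            then obtain c d where cd: "c \<noteq> d" "ends g = {c, d}" by (rule card2E)
            have "s' c * s' d = s c * s d" using inv[OF that cd(2)] unfolding s'_def by auto
            then show ?thesis using cs that cd unfolding consis_def by auto
          next
            case False
            then show ?thesis using cs that unfolding consis_def by auto
          qed
          moreover have "consis ends sigma s' e"
          proof -
            have "s' a = - s a" "s' b = s b" using aK False unfolding s'_def by auto
            moreover have "sigma e = - (s a * s b)" using pm1_cases ne s1 sg by blast
            ultimately show ?thesis using True2 ab unfolding consis_def by simp
          qed
          ultimately show ?thesis using s'1 by blast
        qed
      qed
    qed
  qed
qed

lemma local_fix:
  assumes fE: "finite E" and cE: "\<forall>e\<in>E. 1 \<le> card (ends e) \<and> card (ends e) \<le> 2"
    and dg: "degree E ends x \<le> 3" and s1: "\<forall>v. s v = 1 \<or> s v = -1"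
    and sg: "\<forall>e\<in>E. sigma e = 1 \<or> sigma e = -1"
  shows "\<exists>b F. (b = 1 \<or> b = -1) \<and> F \<subseteq> {e\<in>E. x \<in> ends e} \<and> card F \<le> 1 \<and>
           (\<forall>e\<in>{e\<in>E. x \<in> ends e} - F. consis ends sigma (s(x := b)) e)"
proof -
  define A where "A = {e\<in>E. x \<in> ends e}"
  define NL where "NL = {e\<in>A. card (ends e) = 2}"
  define Lp where "Lp = {e\<in>A. card (ends e) \<noteq> 2}"
  define L where "L = {e\<in>Lp. sigma e \<noteq> 1}"
  define P where "P = {e\<in>NL. consis ends sigma (s(x:=1)) e}"
  define N where "N = {e\<in>NL. consis ends sigma (s(x:=-1)) e}"
  have fA: "finite A" unfolding A_def using fE by auto
  have fNL: "finite NL" "finite Lp" "finite L" unfolding NL_def Lp_def L_def using fA by auto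
  have "NL = {e\<in>E. x \<in> ends e \<and> card (ends e) = 2}" unfolding NL_def A_def by auto
  moreover have "Lp = {e\<in>E. ends e = {x}}"
  proof -
    have H: "ends e = {x}" if "e \<in> E" "x \<in> ends e" "card (ends e) \<noteq> 2" for e
    proof -
      have "card (ends e) = 1" using that cE by force
      then obtain a where "ends e = {a}" by (rule card1E)
      then show ?thesis using that by auto
    qed
    show ?thesis
    proof (rule set_eqI)
      fix e
      show "e \<in> Lp \<longleftrightarrow> e \<in> {e\<in>E. ends e = {x}}"
      proof
        assume "e \<in> Lp"
        then have "e \<in> E" "x \<in> ends e" "card (ends e) \<noteq> 2" unfolding Lp_def A_def by auto
        then show "e \<in> {e\<in>E. ends e = {x}}" using H by simp
      next
        assume "e \<in> {e\<in>E. ends e = {x}}"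
        then have "e \<in> E" "ends e = {x}" by auto
        then show "e \<in> Lp" unfolding Lp_def A_def by simp
      qed
    qed
  qed
  ultimately have deg: "card NL + 2 * card Lp \<le> 3" using dg unfolding degree_def by simp
  have cov: "NL \<subseteq> P \<union> N"
  proof
    fix e assume e: "e \<in> NL"
    then have "card (ends e) = 2" unfolding NL_def by simp
    then obtain c d where cd: "c \<noteq> d" "ends e = {c, d}" by (rule card2E)
    have xcd: "x = c \<or> x = d" using e cd unfolding NL_def A_def by auto
    have se: "sigma e = 1 \<or> sigma e = -1" using e sg unfolding NL_def A_def by auto
    have "consis ends sigma (s(x:=1)) e \<or> consis ends sigma (s(x:=-1)) e"
      unfolding consis_def using cd xcd se s1[rule_format, of c] s1[rule_format, of d] by auto
    then show "e \<in> P \<union> N" using e unfolding P_def N_def by auto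
  qed
  have LLp: "card L \<le> card Lp" unfolding L_def using fNL by (intro card_mono) auto
  have "card (NL - P) + card (NL - N) \<le> card NL"
  proof -
    have "(NL - P) \<inter> (NL - N) = {}" using cov by auto
    then have "card ((NL - P) \<union> (NL - N)) = card (NL - P) + card (NL - N)"
      using fNL by (intro card_Un_disjoint) auto
    moreover have "card ((NL - P) \<union> (NL - N)) \<le> card NL" using fNL by (intro card_mono) auto
    ultimately show ?thesis by simp
  qed
  moreover have "card (L \<union> (NL - P)) \<le> card L + card (NL - P)" by (rule card_Un_le)
  moreover have "card (L \<union> (NL - N)) \<le> card L + card (NL - N)" by (rule card_Un_le)
  ultimately have "card (L \<union> (NL - P)) + card (L \<union> (NL - N)) \<le> 3" using deg LLp by linarith
  then have or: "card (L \<union> (NL - P)) \<le> 1 \<or> card (L \<union> (NL - N)) \<le> 1" by linarith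
  have sub: "L \<union> (NL - P) \<subseteq> A" "L \<union> (NL - N) \<subseteq> A" unfolding L_def Lp_def NL_def by auto
  show ?thesis
  proof (cases "card (L \<union> (NL - P)) \<le> 1")
    case True
    have "\<forall>e\<in>A - (L \<union> (NL - P)). consis ends sigma (s(x := 1)) e"
    proof
      fix e assume e: "e \<in> A - (L \<union> (NL - P))"
      show "consis ends sigma (s(x := 1)) e"
      proof (cases "card (ends e) = 2")
        case True then show ?thesis using e unfolding NL_def P_def by auto
      next
        case False then show ?thesis using e unfolding L_def Lp_def consis_def by auto
      qed
    qed
    then show ?thesis using True sub unfolding A_def by blast
  next
    case False
    then have F: "card (L \<union> (NL - N)) \<le> 1" using or by simp
    have "\<forall>e\<in>A - (L \<union> (NL - N)). consis ends sigma (s(x := -1)) e"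
    proof
      fix e assume e: "e \<in> A - (L \<union> (NL - N))"
      show "consis ends sigma (s(x := -1)) e"
      proof (cases "card (ends e) = 2")
        case True then show ?thesis using e unfolding NL_def N_def by auto
      next
        case False then show ?thesis using e unfolding L_def Lp_def consis_def by auto
      qed
    qed
    then show ?thesis using F sub unfolding A_def by blast
  qed
qed

lemma greedy:
  assumes "finite X"
  shows "\<forall>E s. finite E \<longrightarrow> (\<forall>e\<in>E. 1 \<le> card (ends e) \<and> card (ends e) \<le> 2) \<longrightarrow>
    (\<forall>e\<in>E. sigma e = 1 \<or> sigma e = -1) \<longrightarrow> (\<forall>v\<in>X. degree E ends v \<le> 3) \<longrightarrow>
    (\<forall>v. s v = 1 \<or> s v = -1) \<longrightarrow> (\<forall>e\<in>E. ends e \<inter> X = {} \<longrightarrow> consis ends sigma s e) \<longrightarrow>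
    (\<exists>F. F \<subseteq> E \<and> card F \<le> card X \<and> balanced (E - F) ends sigma)"
  using assms
proof (induction X rule: finite_induct)
  case empty
  show ?case
  proof (intro allI impI)
    fix E s assume fE: "finite E" and cE: "\<forall>e\<in>E. 1 \<le> card (ends e) \<and> card (ends e) \<le> 2"
      and s1: "\<forall>v. s v = 1 \<or> s v = -1" and cs: "\<forall>e\<in>E. ends e \<inter> {} = {} \<longrightarrow> consis ends sigma s e"
    have "balanced E ends sigma" using pot_balanced[OF fE cE s1] cs by auto
    then show "\<exists>F. F \<subseteq> E \<and> card F \<le> card {} \<and> balanced (E - F) ends sigma"
      by (intro exI[of _ "{}"]) auto
  qed
next
  case (insert x X)
  show ?case
  proof (intro allI impI)
    fix E s assume fE: "finite E" and cE: "\<forall>e\<in>E. 1 \<le> card (ends e) \<and> card (ends e) \<le> 2"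
      and sg: "\<forall>e\<in>E. sigma e = 1 \<or> sigma e = -1"
      and dg: "\<forall>v\<in>insert x X. degree E ends v \<le> 3"
      and s1: "\<forall>v. s v = 1 \<or> s v = -1" and cs: "\<forall>e\<in>E. ends e \<inter> insert x X = {} \<longrightarrow> consis ends sigma s e"
    obtain b F1 where b: "b = 1 \<or> b = -1" and F1: "F1 \<subseteq> {e\<in>E. x \<in> ends e}" "card F1 \<le> 1"
      and cF1: "\<forall>e\<in>{e\<in>E. x \<in> ends e} - F1. consis ends sigma (s(x := b)) e"
      using local_fix[OF fE cE _ s1 sg, of x] dg by auto
    define s2 where "s2 = s(x := b)"
    define E' where "E' = E - F1"
    have s21: "\<forall>v. s2 v = 1 \<or> s2 v = -1" using s1 b unfolding s2_def by auto
    have cs2: "\<forall>e\<in>E'. ends e \<inter> X = {} \<longrightarrow> consis ends sigma s2 e"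
    proof (intro ballI impI)
      fix e assume e: "e \<in> E'" "ends e \<inter> X = {}"
      show "consis ends sigma s2 e"
      proof (cases "x \<in> ends e")
        case True then show ?thesis using cF1 e unfolding E'_def s2_def by auto
      next
        case False
        then have "consis ends sigma s e" using cs e unfolding E'_def by auto
        moreover have "\<forall>v\<in>ends e. s v = s2 v" using False unfolding s2_def by auto
        ultimately show ?thesis using consis_cong by metis
      qed
    qed
    have fE': "finite E'" using fE unfolding E'_def by auto
    have dg': "\<forall>v\<in>X. degree E' ends v \<le> 3"
    proof
      fix v assume "v \<in> X"
      then have "degree E ends v \<le> 3" using dg by auto
      moreover have "degree E' ends v \<le> degree E ends v" using degree_mono[OF fE, of E'] unfolding E'_def by auto
      ultimately show "degree E' ends v \<le> 3" by linarith
    qed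
    obtain F' where F': "F' \<subseteq> E'" "card F' \<le> card X" "balanced (E' - F') ends sigma"
    proof -
      have cE': "\<forall>e\<in>E'. 1 \<le> card (ends e) \<and> card (ends e) \<le> 2" using cE unfolding E'_def by auto
      have sg': "\<forall>e\<in>E'. sigma e = 1 \<or> sigma e = -1" using sg unfolding E'_def by auto
      have "\<exists>F. F \<subseteq> E' \<and> card F \<le> card X \<and> balanced (E' - F) ends sigma"
        using insert(3)[THEN spec[of _ E'], THEN spec[of _ s2]] fE' cE' sg' dg' s21 cs2 by blast
      then show ?thesis using that by blast
    qed
    have "card (F' \<union> F1) \<le> card (insert x X)"
      using card_Un_le[of F' F1] F' F1 insert(1,2) by simp
    moreover have "E - (F' \<union> F1) = E' - F'" unfolding E'_def by auto
    moreover have "F' \<union> F1 \<subseteq> E" using F' F1 unfolding E'_def by auto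
    ultimately show "\<exists>F. F \<subseteq> E \<and> card F \<le> card (insert x X) \<and> balanced (E - F) ends sigma"
      using F'(3) by metis
  qed
qed

theorem theorem1:
  fixes V :: "'v set" and E :: "'e set" and ends :: "'e \<Rightarrow> 'v set" and sigma :: "'e \<Rightarrow> int"
  assumes "signed_graph V E ends sigma"
    and "subcubic V E ends"
  shows "frustration_number V E ends sigma = frustration_index V E ends sigma"
proof -
  have fV: "finite V" and fE: "finite E" and eV: "\<forall>e\<in>E. ends e \<subseteq> V"
    and cE: "\<forall>e\<in>E. 1 \<le> card (ends e) \<and> card (ends e) \<le> 2"
    and sg: "\<forall>e\<in>E. sigma e = 1 \<or> sigma e = -1"
    using assms(1) unfolding signed_graph_def by auto
  have dg: "\<forall>v\<in>V. degree E ends v \<le> 3" using assms(2) unfolding subcubic_def by auto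
  define Pnum where "Pnum k = (\<exists>X. X \<subseteq> V \<and> card X = k \<and> balanced {e\<in>E. ends e \<inter> X = {}} ends sigma)" for k
  define Pidx where "Pidx k = (\<exists>F. F \<subseteq> E \<and> card F = k \<and> balanced (E - F) ends sigma)" for k
  have nonempty: "ends e \<noteq> {}" if "e \<in> E" for e using cE that by fastforce
  have bal_empty: "balanced {} ends sigma" unfolding balanced_def is_circle_def by auto
  have exI': "Pidx (card E)" unfolding Pidx_def using bal_empty by auto
  have exN: "Pnum (card V)"
  proof -
    have emp: "{e\<in>E. ends e \<inter> V = {}} = {}" using eV nonempty by blast
    have "balanced {e\<in>E. ends e \<inter> V = {}} ends sigma" by (subst emp) (rule bal_empty)
    then show ?thesis unfolding Pnum_def by blast
  qed
  have A: "\<exists>k'\<le>k. Pnum k'" if Pk: "Pidx k" for k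
  proof -
    obtain F where F: "F \<subseteq> E" "card F = k" "balanced (E - F) ends sigma" using Pk unfolding Pidx_def by auto
    define X where "X = (\<lambda>e. SOME v. v \<in> ends e) ` F"
    have pick: "(SOME v. v \<in> ends e) \<in> ends e" if "e \<in> E" for e
      using nonempty[OF that] by (meson ex_in_conv someI_ex)
    have XV: "X \<subseteq> V" unfolding X_def using pick eV F(1) by blast
    have cX: "card X \<le> k" unfolding X_def using F card_image_le fE finite_subset by blast
    have "{e\<in>E. ends e \<inter> X = {}} \<subseteq> E - F"
    proof
      fix e assume e: "e \<in> {e\<in>E. ends e \<inter> X = {}}"
      have "e \<notin> F"
      proof
        assume "e \<in> F"
        then have "(SOME v. v \<in> ends e) \<in> ends e \<inter> X" using pick e unfolding X_def by auto
        then show False using e by auto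
      qed
      then show "e \<in> E - F" using e by auto
    qed
    then have "balanced {e\<in>E. ends e \<inter> X = {}} ends sigma" using F(3) balanced_mono by blast
    then show ?thesis unfolding Pnum_def using XV cX by blast
  qed
  have B: "\<exists>k'\<le>k. Pidx k'" if Pk: "Pnum k" for k
  proof -
    obtain X where X: "X \<subseteq> V" "card X = k" "balanced {e\<in>E. ends e \<inter> X = {}} ends sigma"
      using Pk unfolding Pnum_def by auto
    have fX: "finite X" using X fV finite_subset by auto
    obtain s where s1: "\<forall>v. s v = 1 \<or> s v = -1" and cs: "\<forall>e\<in>{e\<in>E. ends e \<inter> X = {}}. consis ends sigma s e"
      using balanced_pot[of "{e\<in>E. ends e \<inter> X = {}}" ends sigma] fE cE sg X(3) by auto
    obtain F where "F \<subseteq> E" "card F \<le> card X" "balanced (E - F) ends sigma"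
    proof -
      have dX: "\<forall>v\<in>X. degree E ends v \<le> 3" using dg X(1) by auto
      have cs': "\<forall>e\<in>E. ends e \<inter> X = {} \<longrightarrow> consis ends sigma s e" using cs by auto
      have "\<exists>F. F \<subseteq> E \<and> card F \<le> card X \<and> balanced (E - F) ends sigma"
        using greedy[OF fX, THEN spec[of _ E], THEN spec[of _ s]] fE cE sg dX s1 cs' by blast
      then show ?thesis using that by blast
    qed
    then show ?thesis unfolding Pidx_def using X(2) by auto
  qed
  have "(LEAST k. Pnum k) \<le> (LEAST k. Pidx k)"
  proof -
    have "Pidx (LEAST k. Pidx k)" using exI' by (rule LeastI)
    then obtain k' where "k' \<le> (LEAST k. Pidx k)" "Pnum k'" using A by blast
    then show ?thesis using Least_le[of Pnum k'] by linarith
  qed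
  moreover have "(LEAST k. Pidx k) \<le> (LEAST k. Pnum k)"
  proof -
    have "Pnum (LEAST k. Pnum k)" using exN by (rule LeastI)
    then obtain k' where "k' \<le> (LEAST k. Pnum k)" "Pidx k'" using B by blast
    then show ?thesis using Least_le[of Pidx k'] by linarith
  qed
  ultimately show ?thesis unfolding frustration_number_def frustration_index_def Pnum_def Pidx_def
    by simp
qed
end
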